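(* Let $p\ge 2$, $\delta_i\ge 0$ and $g_i(t)=\frac1p(|t|-\delta_i)_+^p$ for $t\in\mathbb{R}$. For every $T\ge \delta_i$, \[ g''_{i}(t)\ge (p-1)\,\left(\frac{T-\delta_i}{T}\right)^{p-2}\,\left(T^2+(|t|-T)_+^2\right)^\frac{p-2}{2}\qquad\text{for every } |t|\ge T. \]
   Context: $(\cdot)_+$ denotes the positive part; $g_i''(t)=(p-1)(|t|-\delta_i)_+^{p-2}$ for $|t|>\delta_i$. *)

theory Defs
  imports "HOL-Analysis.Analysis"
begin

definition pos_part :: "real \<Rightarrow> real" where
  "pos_part x = max x 0"

definition gfun :: "real \<Rightarrow> real \<Rightarrow> real \<Rightarrow> real" where
  "gfun p \<delta> t = (1 / p) * (pos_part (\<bar>t\<bar> - \<delta>)) powr p"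

text \<open>Its second derivative, as given in the paper's context:
  g''(t) = (p-1) ((|t| - delta)_+)^(p-2).\<close>
definition gpp :: "real \<Rightarrow> real \<Rightarrow> real \<Rightarrow> real" where
  "gpp p \<delta> t = (p - 1) * (pos_part (\<bar>t\<bar> - \<delta>)) powr (p - 2)"

end

theory Submission
  imports Defs
begin

theorem lemmaA3:
  fixes p \<delta> T t :: real
  assumes "p \<ge> 2" and "\<delta> \<ge> 0" and "T \<ge> \<delta>" and "\<bar>t\<bar> \<ge> T"
  shows "gpp p \<delta> t \<ge> (p - 1) * ((T - \<delta>) / T) powr (p - 2)
           * (T\<^sup>2 + (pos_part (\<bar>t\<bar> - T))\<^sup>2) powr ((p - 2) / 2)"
proof -
  define s where "s = \<bar>t\<bar>"
  define q where "q = p - 2"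
  define a where "a = (T - \<delta>) / T"
  define B where "B = T\<^sup>2 + (pos_part (\<bar>t\<bar> - T))\<^sup>2"
  have T0: "T \<ge> 0" using assms by linarith
  have sT: "s \<ge> T" using assms s_def by simp
  have q0: "q \<ge> 0" using assms q_def by simp
  have a0: "a \<ge> 0" using a_def assms T0 by simp
  have pp: "pos_part (\<bar>t\<bar> - T) = s - T" using sT s_def pos_part_def by simp
  have pd: "pos_part (\<bar>t\<bar> - \<delta>) = s - \<delta>" using sT assms s_def pos_part_def by simp
  have B0: "B \<ge> 0" using B_def by simp
  have TT: "T * T \<le> T * s" using sT T0 by (simp add: mult_left_mono)
  have Bs: "B \<le> s\<^sup>2" using B_def pp TT by (simp add: power2_eq_square algebra_simps)
  have "B powr (q/2) \<le> (s\<^sup>2) powr (q/2)"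
    using B0 Bs q0 by (intro powr_mono2) auto
  also have "\<dots> = (s powr 2) powr (q/2)" using sT T0
    by (simp add: powr_realpow)
  also have "\<dots> = s powr q" by (simp add: powr_powr)
  finally have h1: "B powr (q/2) \<le> s powr q" .
  have h2: "a * s \<le> s - \<delta>"
  proof (cases "T = 0")
    case True thus ?thesis using a_def assms sT by simp
  next
    case False
    hence "T > 0" using T0 by simp
    have "a * s = (T - \<delta>) * s / T" using a_def by simp
    also have "\<dots> \<le> s - \<delta>"
    proof -
      have "\<delta> * T \<le> \<delta> * s" using sT assms by (simp add: mult_left_mono)
      hence "(T - \<delta>) * s \<le> (s - \<delta>) * T" by (simp add: algebra_simps)
      thus ?thesis using \<open>T > 0\<close> by (simp add: divide_le_eq)
    qed
    finally show ?thesis .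
  qed
  have "a powr q * B powr (q/2) \<le> a powr q * s powr q"
    using h1 by (intro mult_left_mono) auto
  also have "\<dots> = (a * s) powr q" using a0 sT T0 by (simp add: powr_mult)
  also have "\<dots> \<le> (s - \<delta>) powr q" using h2 a0 sT T0 q0 by (intro powr_mono2) auto
  finally have "a powr q * B powr (q/2) \<le> (s - \<delta>) powr q" .
  hence "(p - 1) * (a powr q * B powr (q/2)) \<le> (p - 1) * (s - \<delta>) powr q"
    using assms by (intro mult_left_mono) auto
  thus ?thesis unfolding gpp_def using pd a_def B_def q_def by (simp add: mult.assoc)
qed

end
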